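(* Let $k\ge2$ and $n<0$, and write $q=q_{n,k}$, $r=r_{n,k}$. Every monomial occurring in $\mathcal{F}_{n,k}(x)$ has exponent at least $r$, and the coefficient of $x^r$ in $\mathcal{F}_{n,k}(x)$ equals $(-1)^r\binom{q}{r}$, with $\binom{q}{r}=0$ when $q<r$. In particular, if $q\ge r$ then $\mathcal{F}_{n,k}(x)$ is not identically zero, and its lowest-degree term is $(-1)^r\binom{q}{r}x^r$.
   Context: For $k\ge2$, the polynomials $\mathcal{F}_{n,k}(x)\in\mathbb{Z}[x]$ ($n\in\mathbb{Z}$) are defined by $\mathcal{F}_{1,k}=1$, $\mathcal{F}_{n,k}=0$ for $n=0,-1,\dots,-(k-2)$, and $\mathcal{F}_{n,k}(x)=\sum_{j=1}^{k}x^{k-j}\mathcal{F}_{n-j,k}(x)$ for all $n\in\mathbb{Z}$. This recurrence is used upwards for $n\ge2$, and downwards for $n\le-(k-1)$ as $\mathcal{F}_{n,k}=\mathcal{F}_{n+k,k}-\sum_{j=1}^{k-1}x^j\mathcal{F}_{n+j,k}$. For $n\le0$, set $q_{n,k}=\lfloor(|n|+1)/k\rfloor$ and let $r_{n,k}\in\{0,\dots,k-1\}$ be the residue of $|n|+1$ modulo $k$. Then $|n|+1=kq_{n,k}+r_{n,k}$. *)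

theory Defs
  imports "HOL-Computational_Algebra.Polynomial"
begin

text \<open>Upward part: Fup k m = F_{m-(k-2),k}, i.e. indices n >= -(k-2).
  Base: F_n = 0 for n = -(k-2)..0 (m = 0..k-2), F_1 = 1 (m = k-1);
  for n >= 2 (m >= k): F_n = sum_{j=1..k} x^(k-j) F_{n-j}.\<close>
function Fup :: "nat \<Rightarrow> nat \<Rightarrow> int poly" where
  "Fup k m = (if m < k - 1 then 0
              else if m = k - 1 then 1
              else (\<Sum>j\<in>{1..k}. monom 1 (k - j) * Fup k (m - j)))"
  by auto
termination
  by (relation "measure (\<lambda>(k, m). m)") auto

text \<open>Downward part: Fdown k m = F_{1-m,k}.
  Base: F_1 = 1 (m = 0), F_n = 0 for n = 0..-(k-2) (m = 1..k-1);
  for n <= -(k-1) (m >= k); the k = 0 guard only ensures termination (k >= 2 is always assumed): F_n = F_{n+k} - sum_{j=1..k-1} x^j F_{n+j}.\<close>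
function Fdown :: "nat \<Rightarrow> nat \<Rightarrow> int poly" where
  "Fdown k m = (if m = 0 then 1
                else if m < k \<or> k = 0 then 0
                else Fdown k (m - k) - (\<Sum>j\<in>{1..k-1}. monom 1 j * Fdown k (m - j)))"
  by auto
termination
  by (relation "measure (\<lambda>(k, m). m)") auto

definition F :: "nat \<Rightarrow> int \<Rightarrow> int poly" where
  "F k n = (if n \<ge> - (int k - 2) then Fup k (nat (n + int k - 2))
            else Fdown k (nat (1 - n)))"

definition qnk :: "int \<Rightarrow> nat \<Rightarrow> nat" where
  "qnk n k = (nat \<bar>n\<bar> + 1) div k"

definition rnk :: "int \<Rightarrow> nat \<Rightarrow> nat" where
  "rnk n k = (nat \<bar>n\<bar> + 1) mod k"

end

theory Submission
  imports Defs
begin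

declare Fdown.simps[simp del] Fup.simps[simp del]

lemma alt_sum:
  "(\<Sum>i<Suc r. (-1::int)^i * int (Suc p choose i)) = (-1)^r * int (p choose r)"
proof (induction r)
  case 0
  then show ?case by simp
next
  case (Suc r)
  have "(\<Sum>i<Suc (Suc r). (-1::int)^i * int (Suc p choose i))
      = (-1)^r * int (p choose r) + (-1)^(Suc r) * int (Suc p choose Suc r)"
    using Suc by simp
  also have "\<dots> = (-1)^(Suc r) * int (p choose Suc r)"
    by (simp add: algebra_simps)
  finally show ?case .
qed

lemma Fdown_rec:
  assumes "m \<ge> k" "k \<ge> 2"
  shows "Fdown k m = Fdown k (m-k) - (\<Sum>j\<in>{1..k-1}. monom 1 j * Fdown k (m-j))"
  using assms by (subst Fdown.simps) auto

lemma Fdown_main: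
  assumes k: "k \<ge> 2"
  shows "(\<forall>i<m mod k. coeff (Fdown k m) i = 0)
       \<and> coeff (Fdown k m) (m mod k) = (-1) ^ (m mod k) * int (m div k choose (m mod k))"
  using k
proof (induction m rule: less_induct)
  case (less m)
  show ?case
  proof (cases "m < k")
    case True
    have "Fdown k m = (if m = 0 then 1 else 0)"
      using True by (subst Fdown.simps) auto
    then show ?thesis using True by auto
  next
    case False
    define r where "r = m mod k"
    define q where "q = m div k"
    have mqr: "m = q * k + r" unfolding q_def r_def by simp
    have rk: "r < k" unfolding r_def using k by simp
    have q1: "q \<ge> 1"
    proof (rule ccontr)
      assume "\<not> q \<ge> 1" then have "q = 0" by simp
      then show False using False mqr rk by simp
    qed
    have IHk: "(\<forall>i<r. coeff (Fdown k (m-k)) i = 0)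
       \<and> coeff (Fdown k (m-k)) r = (-1) ^ r * int ((q-1) choose r)"
    proof -
      have "m - k = (q-1)*k + r" using mqr q1 by (cases q) auto
      hence "(m-k) mod k = r" "(m-k) div k = q - 1"
        using rk by auto
        
      moreover have "m - k < m" using k False by simp
      ultimately show ?thesis using less.IH[of "m-k"] k by simp
    qed
    have IHj: "(\<forall>i<r-j. coeff (Fdown k (m-j)) i = 0)
       \<and> coeff (Fdown k (m-j)) (r-j) = (-1) ^ (r-j) * int (q choose (r-j))"
      if "1 \<le> j" "j \<le> r" for j
    proof -
      have "m - j = q*k + (r-j)" using mqr that by simp
      hence "(m-j) mod k = r - j" "(m-j) div k = q"
        using rk by auto
      moreover have "m - j < m" using that False k by simp
      ultimately show ?thesis using less.IH[of "m-j"] k by simp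
    qed
    have cf: "coeff (Fdown k m) i = coeff (Fdown k (m-k)) i
              - (\<Sum>j\<in>{1..k-1}. if i < j then 0 else coeff (Fdown k (m-j)) (i-j))" for i
      using Fdown_rec[of k m] False k by (simp add: coeff_sum coeff_monom_mult)
    have sumsplit: "(\<Sum>j\<in>{1..k-1}. if i < j then 0 else coeff (Fdown k (m-j)) (i-j))
        = (\<Sum>j\<in>{1..i}. coeff (Fdown k (m-j)) (i-j))" if "i \<le> r" for i
      by (rule sum.mono_neutral_cong_right) (use that rk in auto)
    have low: "coeff (Fdown k m) i = 0" if "i < r" for i
    proof -
      have "(\<Sum>j\<in>{1..i}. coeff (Fdown k (m-j)) (i-j)) = 0"
        using IHj that by (intro sum.neutral) auto
      then show ?thesis using cf[of i] sumsplit[of i] that IHk by simp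
    qed
    have "(\<Sum>j\<in>{1..r}. coeff (Fdown k (m-j)) (r-j))
        = (\<Sum>j\<in>{1..r}. (-1) ^ (r-j) * int (q choose (r-j)))"
      using IHj by (intro sum.cong) auto
    also have "\<dots> = (\<Sum>i<r. (-1) ^ i * int (q choose i))"
      by (rule sum.reindex_bij_witness[of _ "\<lambda>i. r - i" "\<lambda>j. r - j"]) auto
    finally have S: "(\<Sum>j\<in>{1..r}. coeff (Fdown k (m-j)) (r-j))
        = (\<Sum>i<r. (-1) ^ i * int (q choose i))" .
    have top: "coeff (Fdown k m) r = (-1)^r * int (q choose r)"
    proof (cases r)
      case 0
      then show ?thesis using cf[of r] sumsplit[of r] IHk q1 by simp
    next
      case (Suc r')
      obtain p where p: "q = Suc p" using q1 by (cases q) auto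
      have A: "(\<Sum>i<r. (-1) ^ i * int (q choose i)) = (-1)^r' * int (p choose r')"
        using alt_sum[where r=r' and p=p] p Suc by simp
      have "coeff (Fdown k m) r = (-1)^r * int (p choose r) - (-1)^r' * int (p choose r')"
        using cf[of r] sumsplit[of r] IHk S A p by simp
      also have "\<dots> = (-1)^r * int (q choose r)" using p Suc by (simp add: algebra_simps)
      finally show ?thesis .
    qed
    show ?thesis using low top unfolding r_def q_def by blast
  qed
qed

theorem mainTheorem5:
  fixes k :: nat and n :: int
  assumes "k \<ge> 2" and "n < 0"
  defines "q \<equiv> qnk n k" and "r \<equiv> rnk n k"
  shows "(\<forall>i<r. coeff (F k n) i = 0)
       \<and> coeff (F k n) r = (-1) ^ r * int (q choose r)
       \<and> (q \<ge> r \<longrightarrow> F k n \<noteq> 0 \<and> (LEAST i. coeff (F k n) i \<noteq> 0) = r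
              \<and> coeff (F k n) r = (-1) ^ r * int (q choose r))"
proof -
  define m where "m = nat (1 - n)"
  have mabs: "nat \<bar>n\<bar> + 1 = m" unfolding m_def using assms by simp
  have qr: "q = m div k" "r = m mod k" unfolding q_def r_def qnk_def rnk_def mabs by auto
  have FF: "F k n = Fdown k m"
  proof (cases "n \<ge> - (int k - 2)")
    case True
    have "m < k" using True assms unfolding m_def by simp
    hence "Fdown k m = 0" using assms(2) unfolding m_def
      by (subst Fdown.simps) auto
    moreover have "Fup k (nat (n + int k - 2)) = 0"
      using True assms by (subst Fup.simps) auto
    ultimately show ?thesis using True unfolding F_def by simp
  next
    case False
    then show ?thesis unfolding F_def m_def by simp
  qed
  have M: "(\<forall>i<r. coeff (F k n) i = 0) \<and> coeff (F k n) r = (-1) ^ r * int (q choose r)"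
    using Fdown_main[OF assms(1), of m] FF qr by simp
  moreover have "F k n \<noteq> 0 \<and> (LEAST i. coeff (F k n) i \<noteq> 0) = r" if "q \<ge> r"
  proof -
    have nz: "coeff (F k n) r \<noteq> 0" using M that by simp
    have "(LEAST i. coeff (F k n) i \<noteq> 0) = r"
      by (rule Least_equality) (use nz M in \<open>auto simp: not_less[symmetric]\<close>)
    then show ?thesis using nz by auto
  qed
  ultimately show ?thesis by blast
qed

end
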